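(* Let $p,\mu>1$, $\varepsilon>0$, and let $\rho:[0,\infty)\to[2-\mu,p]$ be continuous and decreasing with $\rho(0)=p$ and $\lim_{r\to\infty}\rho(r)=2-\mu$. Define $$G(\xi):=\int_0^{|\xi|}\int_0^s(\varepsilon+r)^{\rho(r)-2}\,\mathrm{d}r\,\mathrm{d}s,\quad\xi\in\mathbb{R}^2.$$ Then there are constants $c_5,c_6>0$ with $$c_5(1+|\xi|)^{-\mu}|\eta|^2\le D^2G(\xi)(\eta,\eta)\le c_6(1+|\xi|)^{p-2}|\eta|^2\quad\text{for all }\xi,\eta\in\mathbb{R}^2,$$ and there is a constant $c_{49}$ with $|D^2G(\xi)|\,|\xi|^2\le c_{49}(G(\xi)+1)$ for all $\xi\in\mathbb{R}^2$. *)

theory Defs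
  imports "HOL-Analysis.Analysis"
begin

definition Gfun :: "real \<Rightarrow> (real \<Rightarrow> real) \<Rightarrow> real^2 \<Rightarrow> real" where
  "Gfun \<epsilon> \<rho> \<xi> =
     integral {0..norm \<xi>} (\<lambda>s. integral {0..s} (\<lambda>r. (\<epsilon> + r) powr (\<rho> r - 2)))"

end

theory Submission
  imports Defs
begin


lemma powr_sandwich:
  fixes x y m0 M0 e lo hi :: real
  assumes "0 < m0" "m0 \<le> 1" "1 \<le> M0" "m0*y \<le> x" "x \<le> M0*y" "1 \<le> y" "lo \<le> e" "e \<le> hi"
  shows "x powr e \<le> (M0 powr hi + m0 powr lo) * y powr hi"
    and "min (m0 powr hi) (M0 powr lo) * y powr lo \<le> x powr e"
proof -
  define q where "q = x / y"
  have y0: "y > 0" using assms by auto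
  have qb: "m0 \<le> q" "q \<le> M0" using assms y0 by (auto simp: q_def field_simps)
  have q0: "q > 0" using qb assms by auto
  have xq: "x = q * y" using y0 by (simp add: q_def)
  have xe: "x powr e = q powr e * y powr e" using q0 y0 xq by (simp add: powr_mult)
  have ye1: "y powr e \<le> y powr hi" "y powr lo \<le> y powr e" using assms by (auto intro: powr_mono)
  have qu: "q powr e \<le> M0 powr hi + m0 powr lo"
  proof (cases "e \<ge> 0")
    case True
    have "q powr e \<le> M0 powr e" using qb q0 True by (simp add: powr_mono2)
    also have "\<dots> \<le> M0 powr hi" using assms by (auto intro: powr_mono)
    finally show ?thesis by (smt (verit) powr_ge_zero)
  next
    case False
    have "q powr e \<le> m0 powr e" using qb q0 False assms by (simp add: powr_mono2')
    also have "\<dots> \<le> m0 powr lo" using assms by (simp add: powr_mono')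
    finally show ?thesis by (smt (verit) powr_ge_zero)
  qed
  have ql: "min (m0 powr hi) (M0 powr lo) \<le> q powr e"
  proof (cases "e \<ge> 0")
    case True
    have "m0 powr hi \<le> m0 powr e" using assms True by (simp add: powr_mono')
    also have "\<dots> \<le> q powr e" using qb assms True by (simp add: powr_mono2)
    finally show ?thesis by simp
  next
    case False
    have "M0 powr lo \<le> M0 powr e" using assms by (auto intro: powr_mono)
    also have "\<dots> \<le> q powr e" using qb q0 False assms by (simp add: powr_mono2')
    finally show ?thesis by simp
  qed
  show "x powr e \<le> (M0 powr hi + m0 powr lo) * y powr hi"
    unfolding xe using qu ye1 by (meson mult_mono order_trans powr_ge_zero add_nonneg_nonneg)
  show "min (m0 powr hi) (M0 powr lo) * y powr lo \<le> x powr e"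
    unfolding xe using ql ye1 by (smt (verit) mult_mono powr_ge_zero)
qed



locale P55 =
  fixes p mu eps :: real and rho :: "real \<Rightarrow> real"
  assumes p1: "p > 1" and mu1: "mu > 1" and eps0: "eps > 0"
    and rcont: "continuous_on {0..} rho"
    and rmono: "\<And>r s. 0 \<le> r \<Longrightarrow> r \<le> s \<Longrightarrow> rho s \<le> rho r"
    and rrange: "\<And>r. 0 \<le> r \<Longrightarrow> rho r \<in> {2 - mu..p}"
begin

definition ff :: "real \<Rightarrow> real" where "ff r = (eps + r) powr (rho r - 2)"
definition ph :: "real \<Rightarrow> real" where "ph s = integral {0..s} ff"
definition gg :: "real \<Rightarrow> real" where "gg t = integral {0..t} ph"
definition aa :: "real \<Rightarrow> real" where "aa t = (if t = 0 then ff 0 else ph t / t)"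
definition bb :: "real \<Rightarrow> real" where "bb t = (if t = 0 then 0 else (ff t - aa t) / t^2)"

lemma ff_cont: "continuous_on {0..} ff"
  unfolding ff_def using rcont eps0
  by (auto intro!: continuous_intros)

lemma ff_cont_b: "continuous_on {0..b} ff"
  using ff_cont by (rule continuous_on_subset) auto

lemma ff_pos: "0 \<le> r \<Longrightarrow> ff r > 0"
  unfolding ff_def using eps0 by simp

lemma ff_int: "0 \<le> a \<Longrightarrow> ff integrable_on {a..b}"
  by (rule integrable_continuous_interval, rule continuous_on_subset[OF ff_cont]) auto

lemma ph_deriv_within: "0 \<le> t \<Longrightarrow> t \<le> b \<Longrightarrow> (ph has_real_derivative ff t) (at t within {0..b})"
  unfolding ph_def by (rule integral_has_real_derivative[OF ff_cont_b]) auto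

lemma ph_deriv: "0 < t \<Longrightarrow> (ph has_real_derivative ff t) (at t)"
proof -
  assume t: "0 < t"
  have "(ph has_real_derivative ff t) (at t within {0..t+1})" using t by (intro ph_deriv_within) auto
  moreover have "at t within {0..t+1} = at t"
    by (rule at_within_interior) (use t in \<open>simp add: interior_atLeastAtMost_real\<close>)
  ultimately show ?thesis by simp
qed

lemma ph_cont_b: "continuous_on {0..b} ph"
  unfolding ph_def by (rule indefinite_integral_continuous_1, rule ff_int) simp

lemma ph_split: "0 \<le> s \<Longrightarrow> s \<le> t \<Longrightarrow> ph t = ph s + integral {s..t} ff"
  unfolding ph_def using Henstock_Kurzweil_Integration.integral_combine[where f=ff and a=0 and c=s and b=t] ff_int[of 0 t] by simp

lemma int_ff_nonneg: "0 \<le> s \<Longrightarrow> integral {s..t} ff \<ge> 0"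
  by (rule integral_nonneg[OF ff_int]) (auto intro: ff_pos[THEN less_imp_le])

lemma ph_nonneg: "0 \<le> t \<Longrightarrow> ph t \<ge> 0"
  unfolding ph_def by (rule int_ff_nonneg) simp

lemma ph_mono: "0 \<le> s \<Longrightarrow> s \<le> t \<Longrightarrow> ph s \<le> ph t"
proof -
  assume a: "0 \<le> s" "s \<le> t"
  show ?thesis using ph_split[OF a] int_ff_nonneg[OF a(1), of t] by linarith
qed

lemma ph_int: "0 \<le> a \<Longrightarrow> ph integrable_on {a..b}"
  by (rule integrable_continuous_interval, rule continuous_on_subset[OF ph_cont_b[of b]]) auto

lemma gg_deriv_within: "0 \<le> t \<Longrightarrow> t \<le> b \<Longrightarrow> (gg has_real_derivative ph t) (at t within {0..b})"
  unfolding gg_def by (rule integral_has_real_derivative[OF ph_cont_b]) auto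

lemma gg_split: "0 \<le> s \<Longrightarrow> s \<le> t \<Longrightarrow> gg t = gg s + integral {s..t} ph"
  unfolding gg_def using Henstock_Kurzweil_Integration.integral_combine[where f=ph and a=0 and c=s and b=t] ph_int[of 0 t] by simp

lemma int_ph_nonneg: "0 \<le> s \<Longrightarrow> integral {s..t} ph \<ge> 0"
  by (rule integral_nonneg[OF ph_int]) (auto intro: ph_nonneg)

lemma gg_nonneg: "0 \<le> t \<Longrightarrow> gg t \<ge> 0"
  unfolding gg_def by (rule int_ph_nonneg) simp

lemma gg_deriv: "0 < t \<Longrightarrow> (gg has_real_derivative ph t) (at t)"
proof -
  assume t: "0 < t"
  have "(gg has_real_derivative ph t) (at t within {0..t+1})" using t by (intro gg_deriv_within) auto
  moreover have "at t within {0..t+1} = at t"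
    by (rule at_within_interior) (use t in \<open>simp add: interior_atLeastAtMost_real\<close>)
  ultimately show ?thesis by simp
qed

end


lemma int_const_le:
  fixes f :: "real \<Rightarrow> real"
  assumes "a \<le> b" "f integrable_on {a..b}" "\<And>x. x \<in> {a..b} \<Longrightarrow> c \<le> f x"
  shows "(b - a) * c \<le> integral {a..b} f"
proof -
  have "integral {a..b} (\<lambda>_. c) \<le> integral {a..b} f"
    by (rule integral_le) (use assms in auto)
  then show ?thesis using assms(1) by simp
qed

lemma int_le_const:
  fixes f :: "real \<Rightarrow> real"
  assumes "a \<le> b" "f integrable_on {a..b}" "\<And>x. x \<in> {a..b} \<Longrightarrow> f x \<le> c"
  shows "integral {a..b} f \<le> (b - a) * c"
proof -
  have "integral {a..b} f \<le> integral {a..b} (\<lambda>_. c)"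
    by (rule integral_le) (use assms in auto)
  then show ?thesis using assms(1) by simp
qed

context P55 begin

definition "m0 = min 1 eps"
definition "M0 = max 1 eps"
definition "Cq = M0 powr (p-2) + m0 powr (-mu)"
definition "cq = min (m0 powr (p-2)) (M0 powr (-mu))"

lemma m0_pos: "m0 > 0" unfolding m0_def using eps0 by simp
lemma M0_pos: "M0 > 0" unfolding M0_def using eps0 by simp
lemma cq_pos: "cq > 0" unfolding cq_def using m0_pos M0_pos by simp
lemma Cq_pos: "Cq > 0" unfolding Cq_def using m0_pos M0_pos by (simp add: add_pos_pos)

lemma ff_bounds:
  assumes t: "0 \<le> t"
  shows "ff t \<le> Cq * (1+t) powr (p-2)" "cq * (1+t) powr (-mu) \<le> ff t"
proof -
  have m: "0 < m0" "m0 \<le> 1" "1 \<le> M0" "m0*(1+t) \<le> eps + t" "eps + t \<le> M0*(1+t)"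
    unfolding m0_def M0_def using eps0 t mult_left_le_one_le[of t eps] mult_right_mono[of 1 eps t]
    by (auto simp: min_def max_def algebra_simps)
  have r: "-mu \<le> rho t - 2" "rho t - 2 \<le> p - 2" using rrange[OF t] by auto
  show "ff t \<le> Cq * (1+t) powr (p-2)"
    unfolding ff_def Cq_def by (rule powr_sandwich(1)[OF m _ r]) (use t in simp)
  show "cq * (1+t) powr (-mu) \<le> ff t"
    unfolding ff_def cq_def by (rule powr_sandwich(2)[OF m _ r]) (use t in simp)
qed

lemma aa_lower:
  assumes t: "0 \<le> t"
  shows "cq * (1+t) powr (-mu) \<le> aa t"
proof (cases "t = 0")
  case True then show ?thesis using ff_bounds[of 0] by (simp add: aa_def)
next
  case False
  then have tp: "t > 0" using t by simp
  have "(t - 0) * (cq * (1+t) powr (-mu)) \<le> integral {0..t} ff"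
  proof (rule int_const_le)
    fix x assume x: "x \<in> {0..t}"
    have "cq * (1+t) powr (-mu) \<le> cq * (1+x) powr (-mu)"
      using x cq_pos mu1 by (auto intro!: mult_left_mono powr_mono2')
    also have "\<dots> \<le> ff x" using ff_bounds x by auto
    finally show "cq * (1+t) powr (-mu) \<le> ff x" .
  qed (use t ff_int in auto)
  then show ?thesis using tp by (simp add: aa_def ph_def field_simps)
qed

lemma aa_pos: "0 \<le> t \<Longrightarrow> aa t > 0"
  using aa_lower[of t] cq_pos by (smt (verit) powr_gt_zero mult_pos_pos)

definition "C6 = Cq * (1 + 1 / (p - 1))"

lemma C6_pos: "C6 > 0" unfolding C6_def using Cq_pos p1 by (simp add: field_simps)

lemma powr_antideriv:
  assumes t: "0 \<le> t"
  shows "integral {0..t} (\<lambda>r. (1+r) powr (p-2)) = ((1+t) powr (p-1) - 1) / (p-1)"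
proof -
  have "((\<lambda>r. (1+r) powr (p-2)) has_integral ((\<lambda>r. (1+r) powr (p-1) / (p-1)) t - (\<lambda>r. (1+r) powr (p-1) / (p-1)) 0)) {0..t}"
  proof (rule fundamental_theorem_of_calculus)
    fix x assume x: "x \<in> {0..t}"
    have d0: "((\<lambda>r. 1 + r) has_real_derivative 1) (at x)"
      by (auto intro!: derivative_eq_intros)
    have "((\<lambda>r. (1+r) powr (p-1)) has_real_derivative (p-1) * (1+x) powr (p-1 - of_nat 1) * 1) (at x)"
      by (rule DERIV_fun_powr[OF d0]) (use x in auto)
    then have "((\<lambda>r. (1+r) powr (p-1) / (p-1)) has_real_derivative (p-1) * (1+x) powr (p-1 - of_nat 1) * 1 / (p-1)) (at x)"
      by (rule DERIV_cdivide)
    then have "((\<lambda>r. (1+r) powr (p-1) / (p-1)) has_real_derivative (1+x) powr (p-2)) (at x)"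
      using p1 by simp
    then have "((\<lambda>r. (1+r) powr (p-1) / (p-1)) has_real_derivative (1+x) powr (p-2)) (at x within {0..t})"
      by (rule has_field_derivative_at_within)
    then show "((\<lambda>r. (1+r) powr (p-1) / (p-1)) has_vector_derivative (1+x) powr (p-2)) (at x within {0..t})"
      by (simp add: has_real_derivative_iff_has_vector_derivative)
  qed (use t in auto)
  then show ?thesis by (simp add: integral_unique diff_divide_distrib)
qed

lemma aa_upper:
  assumes t: "0 \<le> t"
  shows "aa t \<le> C6 * (1+t) powr (p-2)"
proof (cases "t = 0")
  case True
  have "ff 0 \<le> Cq" using ff_bounds[of 0] by simp
  also have "\<dots> \<le> C6" unfolding C6_def using Cq_pos p1 by simp
  finally show ?thesis using True by (simp add: aa_def)
next
  case False
  then have tp: "t > 0" using t by simp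
  have "ph t \<le> C6 * t * (1+t) powr (p-2)"
  proof (cases "p \<ge> 2")
    case True
    have "integral {0..t} ff \<le> (t - 0) * (Cq * (1+t) powr (p-2))"
    proof (rule int_le_const)
      fix x assume x: "x \<in> {0..t}"
      have "ff x \<le> Cq * (1+x) powr (p-2)" using ff_bounds x by auto
      also have "\<dots> \<le> Cq * (1+t) powr (p-2)"
        using x Cq_pos True by (auto intro!: mult_left_mono powr_mono2)
      finally show "ff x \<le> Cq * (1+t) powr (p-2)" .
    qed (use t ff_int in auto)
    also have "\<dots> \<le> C6 * t * (1+t) powr (p-2)"
      unfolding C6_def using Cq_pos p1 t
      by (auto simp: field_simps intro!: mult_right_mono)
    finally show ?thesis by (simp add: ph_def)
  next
    case False
    have "integral {0..t} ff \<le> integral {0..t} (\<lambda>r. Cq * (1+r) powr (p-2))"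
    proof (rule integral_le)
      show "(\<lambda>r. Cq * (1+r) powr (p-2)) integrable_on {0..t}"
        by (rule integrable_continuous_interval) (auto intro!: continuous_intros)
    qed (use ff_int ff_bounds in auto)
    also have "\<dots> = Cq * (((1+t) powr (p-1) - 1) / (p-1))"
      using powr_antideriv[OF t] by simp
    also have "\<dots> \<le> Cq * ((t * (1+t) powr (p-2)) / (p-1))"
    proof -
      have e: "(1+t) powr (p-1) = (1+t) * (1+t) powr (p-2)"
      proof -
        have "(1+t) powr (p-1) = (1+t) powr (1 + (p-2))" by simp
        also have "\<dots> = (1+t) powr 1 * (1+t) powr (p-2)" by (rule powr_add)
        also have "\<dots> = (1+t) * (1+t) powr (p-2)" using t by simp
        finally show ?thesis .
      qed
      have "(1+t) powr (p-2) \<le> 1" using powr_mono[of "p-2" 0 "1+t"] t False by simp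
      then have "(1+t) powr (p-1) - 1 \<le> t * (1+t) powr (p-2)" unfolding e by (simp add: algebra_simps)
      then show ?thesis using Cq_pos p1 by (auto intro!: mult_left_mono divide_right_mono)
    qed
    also have "\<dots> \<le> C6 * t * (1+t) powr (p-2)"
    proof -
      define X where "X = Cq * (t * (1+t) powr (p-2))"
      have X0: "0 \<le> X" unfolding X_def using Cq_pos t by simp
      have "Cq * ((t * (1+t) powr (p-2)) / (p-1)) = X * (1 / (p-1))" unfolding X_def by simp
      also have "\<dots> \<le> X * (1 + 1 / (p-1))" using X0 by (intro mult_left_mono) auto
      also have "\<dots> = C6 * t * (1+t) powr (p-2)" unfolding X_def C6_def by simp
      finally show ?thesis .
    qed
    finally show ?thesis by (simp add: ph_def)
  qed
  then show ?thesis using tp by (simp add: aa_def field_simps)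
qed

end


context P55 begin

definition "KK = 4 powr (max 0 (p-2))"
definition "RR = max 0 (1 - eps)"

lemma KK_ge1: "KK \<ge> 1" unfolding KK_def by (rule ge_one_powr_ge_zero) auto
lemma RR_nonneg: "RR \<ge> 0" unfolding RR_def by simp

lemma dbl:
  assumes "RR \<le> u" "u \<le> r" "r \<le> 4*u"
  shows "ff r \<le> KK * ff u"
proof -
  have u0: "0 \<le> u" and e1: "1 \<le> eps + u" using assms unfolding RR_def by auto
  have r0: "0 \<le> r" using u0 assms by simp
  define q where "q = rho r - 2"
  have qle: "q \<le> p - 2" using rrange[OF r0] unfolding q_def by simp
  have "rho r \<le> rho u" using rmono[OF u0 assms(2)] .
  then have fu: "(eps+u) powr q \<le> ff u" unfolding ff_def q_def using e1 by (intro powr_mono) auto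
  have fpos: "0 \<le> (eps+u) powr q" by simp
  show ?thesis
  proof (cases "q \<le> 0")
    case True
    have "ff r = (eps+r) powr q" unfolding ff_def q_def ..
    also have "\<dots> \<le> (eps+u) powr q" using True assms e1 by (intro powr_mono2') auto
    also have "\<dots> \<le> ff u" by (rule fu)
    also have "\<dots> \<le> KK * ff u" using KK_ge1 ff_pos[OF u0] by simp
    finally show ?thesis .
  next
    case False
    have "ff r = (eps+r) powr q" unfolding ff_def q_def ..
    also have "\<dots> \<le> (4 * (eps+u)) powr q" using False assms eps0 by (intro powr_mono2) auto
    also have "\<dots> = 4 powr q * (eps+u) powr q" by (rule powr_mult)
    also have "\<dots> \<le> KK * (eps+u) powr q"
      unfolding KK_def using qle False by (intro mult_right_mono powr_mono) auto
    also have "\<dots> \<le> KK * ff u" using KK_ge1 fu by simp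
    finally show ?thesis .
  qed
qed

lemma key:
  assumes "4*RR \<le> t" "t/2 \<le> r" "r \<le> t"
  shows "t * ff r \<le> 4 * KK * ph (t/2)"
proof -
  have t0: "0 \<le> t" using assms RR_nonneg by simp
  have "(t/2 - t/4) * (ff r / KK) \<le> integral {t/4..t/2} ff"
  proof (rule int_const_le)
    fix x assume x: "x \<in> {t/4..t/2}"
    have "ff r \<le> KK * ff x" by (rule dbl) (use x assms in auto)
    then show "ff r / KK \<le> ff x" using KK_ge1 by (simp add: field_simps)
  qed (use t0 ff_int in auto)
  also have "\<dots> \<le> ph (t/2)" using ph_split[of "t/4" "t/2"] ph_nonneg[of "t/4"] t0 by simp
  finally have "(t/4) * (ff r / KK) \<le> ph (t/2)" by simp
  then show ?thesis using KK_ge1 by (simp add: field_simps)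
qed

lemma ph_double:
  assumes "4*RR \<le> t" "0 < t"
  shows "ph t \<le> (1 + 2*KK) * ph (t/2)"
proof -
  have "integral {t/2..t} ff \<le> (t - t/2) * (4 * KK * ph (t/2) / t)"
  proof (rule int_le_const)
    fix x assume x: "x \<in> {t/2..t}"
    have "t * ff x \<le> 4 * KK * ph (t/2)" by (rule key) (use x assms in auto)
    then show "ff x \<le> 4 * KK * ph (t/2) / t" using assms by (simp add: field_simps)
  qed (use assms ff_int in auto)
  also have "\<dots> = 2 * KK * ph (t/2)" using assms by (simp add: field_simps)
  finally show ?thesis using ph_split[of "t/2" t] assms by (simp add: algebra_simps)
qed

lemma gg_lower:
  assumes "0 \<le> t"
  shows "(t/2) * ph (t/2) \<le> gg t"
proof -
  have "(t - t/2) * ph (t/2) \<le> integral {t/2..t} ph"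
    by (rule int_const_le) (use assms ph_int ph_mono in auto)
  then show ?thesis using gg_split[of "t/2" t] gg_nonneg[of "t/2"] assms by simp
qed

lemma large:
  assumes "4*RR \<le> t" "0 < t"
  shows "(ff t + 2 * aa t) * t^2 \<le> (16*KK + 4) * gg t"
proof -
  have P: "0 \<le> ph (t/2)" using ph_nonneg assms by simp
  have "t * ff t \<le> 4 * KK * ph (t/2)" by (rule key) (use assms in auto)
  then have A: "ff t * t^2 \<le> 8 * KK * ((t/2) * ph (t/2))"
    using assms by (simp add: power2_eq_square field_simps mult_left_mono)
  have "ph t \<le> (1 + 2*KK) * ph (t/2)" by (rule ph_double) (use assms in auto)
  then have "t * ph t \<le> t * ((1 + 2*KK) * ph (t/2))" using assms by (intro mult_left_mono) auto
  then have B: "2 * aa t * t^2 \<le> (4 + 8*KK) * ((t/2) * ph (t/2))"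
    using assms by (simp add: aa_def power2_eq_square field_simps)
  have G: "(t/2) * ph (t/2) \<le> gg t" by (rule gg_lower) (use assms in auto)
  have "(ff t + 2 * aa t) * t^2 \<le> (16*KK + 4) * ((t/2) * ph (t/2))"
    using A B by (simp add: algebra_simps)
  also have "\<dots> \<le> (16*KK + 4) * gg t" using G KK_ge1 by (intro mult_left_mono) auto
  finally show ?thesis .
qed

definition "BB = (1 + 4*RR) powr (max 0 (p-2))"
definition "c49 = max (16*KK + 4) (3 * C6 * BB * (4*RR)^2)"

lemma small:
  assumes "0 \<le> t" "t \<le> 4*RR"
  shows "(ff t + 2 * aa t) * t^2 \<le> 3 * C6 * BB * (4*RR)^2"
proof -
  have pb: "(1+t) powr (p-2) \<le> BB"
  proof (cases "p \<ge> 2")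
    case True
    then show ?thesis unfolding BB_def using assms by (auto intro!: powr_mono2)
  next
    case False
    have "(1+t) powr (p-2) \<le> 1" using powr_mono[of "p-2" 0 "1+t"] assms False by simp
    also have "1 \<le> BB" unfolding BB_def using RR_nonneg by (intro ge_one_powr_ge_zero) auto
    finally show ?thesis .
  qed
  have "ff t \<le> Cq * (1+t) powr (p-2)" using ff_bounds assms by simp
  also have "\<dots> \<le> C6 * (1+t) powr (p-2)" unfolding C6_def using Cq_pos p1
    by (intro mult_right_mono) auto
  finally have f1: "ff t \<le> C6 * BB" using pb C6_pos by (smt (verit) mult_left_mono)
  have a1: "aa t \<le> C6 * BB" using aa_upper[OF assms(1)] pb C6_pos by (smt (verit) mult_left_mono)
  have "ff t + 2 * aa t \<le> 3 * C6 * BB" using f1 a1 by simp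
  moreover have "t^2 \<le> (4*RR)^2" using assms by (intro power_mono) auto
  moreover have "0 \<le> ff t + 2 * aa t" using ff_pos aa_pos assms by (smt (verit))
  moreover have "0 \<le> 3 * C6 * BB" using C6_pos BB_def by simp
  ultimately show ?thesis by (meson mult_mono zero_le_power2 order_trans)
qed

lemma norm_bound_1d:
  assumes "0 \<le> t"
  shows "(ff t + 2 * aa t) * t^2 \<le> c49 * (gg t + 1)"
proof -
  have g0: "0 \<le> gg t" using gg_nonneg assms by simp
  have c0: "16*KK + 4 \<le> c49" "3 * C6 * BB * (4*RR)^2 \<le> c49" unfolding c49_def by auto
  have c1: "0 \<le> c49" using c0 KK_ge1 by linarith
  show ?thesis
  proof (cases "4*RR \<le> t \<and> 0 < t")
    case True
    have "(ff t + 2 * aa t) * t^2 \<le> (16*KK + 4) * gg t" using large True by simp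
    also have "\<dots> \<le> c49 * gg t" using c0 g0 by (intro mult_right_mono) auto
    also have "\<dots> \<le> c49 * (gg t + 1)" using c1 by (simp add: algebra_simps)
    finally show ?thesis .
  next
    case False
    show ?thesis
    proof (cases "t = 0")
      case True then show ?thesis using c1 g0 by simp
    next
      case False2: False
      have "(ff t + 2 * aa t) * t^2 \<le> 3 * C6 * BB * (4*RR)^2" using small False False2 assms by simp
      also have "\<dots> \<le> c49" by (rule c0(2))
      also have "\<dots> \<le> c49 * (gg t + 1)" using c1 g0 by (simp add: algebra_simps)
      finally show ?thesis .
    qed
  qed
qed

end


lemma comp_norm0:
  fixes h :: "real \<Rightarrow> real"
  assumes "((\<lambda>t. h t / t) \<longlongrightarrow> L) (at 0 within {0..1})"
  shows "((\<lambda>y::real^2. h (norm y) / norm y) \<longlongrightarrow> L) (at 0)"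
proof -
  have "filterlim norm (at 0 within {0..1}) (at (0::real^2))"
  proof (subst filterlim_at, intro conjI)
    show "(norm \<longlongrightarrow> 0) (at (0::real^2))"
      using tendsto_norm[OF tendsto_ident_at[of "0::real^2" UNIV]] by simp
    show "\<forall>\<^sub>F x in at (0::real^2). norm x \<in> {0..1} \<and> norm x \<noteq> 0"
      unfolding eventually_at by (rule exI[of _ 1]) (auto simp: dist_norm)
  qed
  from filterlim_compose[OF assms this] show ?thesis by simp
qed

lemma norm_inner_left_le: "norm (blinfun_inner_left (y::'a::real_inner)) \<le> norm y"
  by (rule norm_blinfun_bound) (auto simp: Cauchy_Schwarz_ineq2 mult.commute)

context P55 begin

definition DG :: "real^2 \<Rightarrow> ((real^2) \<Rightarrow>\<^sub>L real)" where
  "DG x = aa (norm x) *\<^sub>R blinfun_inner_left x"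

definition D2 :: "real^2 \<Rightarrow> ((real^2) \<Rightarrow>\<^sub>L ((real^2) \<Rightarrow>\<^sub>L real))" where
  "D2 x = Blinfun (\<lambda>h. aa (norm x) *\<^sub>R blinfun_inner_left h + (bb (norm x) * (h \<bullet> x)) *\<^sub>R blinfun_inner_left x)"

lemma D2_bl: "bounded_linear (\<lambda>h. aa (norm x) *\<^sub>R blinfun_inner_left h + (bb (norm x) * (h \<bullet> x)) *\<^sub>R blinfun_inner_left (x::real^2))"
  by (auto intro!: bounded_linear_intros)

lemma D2_apply: "blinfun_apply (D2 x) h = aa (norm x) *\<^sub>R blinfun_inner_left h + (bb (norm x) * (h \<bullet> x)) *\<^sub>R blinfun_inner_left x"
  unfolding D2_def by (simp add: bounded_linear_Blinfun_apply[OF D2_bl])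

lemma D2_apply2: "blinfun_apply (blinfun_apply (D2 x) h) z = aa (norm x) * (z \<bullet> h) + bb (norm x) * (h \<bullet> x) * (z \<bullet> x)"
  by (simp add: D2_apply blinfun.add_left blinfun.scaleR_left)

lemma G_eq: "Gfun eps rho x = gg (norm x)"
  unfolding Gfun_def gg_def ph_def ff_def by simp

lemma ph0: "ph 0 = 0" unfolding ph_def by simp
lemma gg0: "gg 0 = 0" unfolding gg_def by simp

lemma aa_tendsto: "((\<lambda>y::real^2. aa (norm y)) \<longlongrightarrow> ff 0) (at 0)"
proof -
  have "(ph has_real_derivative ff 0) (at 0 within {0..1})" by (rule ph_deriv_within) auto
  then have "((\<lambda>t. ph t / t) \<longlongrightarrow> ff 0) (at 0 within {0..1})"
    by (simp add: has_field_derivative_iff ph0)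
  then have "((\<lambda>y::real^2. ph (norm y) / norm y) \<longlongrightarrow> ff 0) (at 0)" by (rule comp_norm0)
  moreover have "\<forall>\<^sub>F y in at (0::real^2). ph (norm y) / norm y = aa (norm y)"
    unfolding eventually_at by (rule exI[of _ 1]) (auto simp: aa_def)
  ultimately show ?thesis by (rule Lim_transform_eventually)
qed

lemma gg_tendsto: "((\<lambda>y::real^2. gg (norm y) / norm y) \<longlongrightarrow> 0) (at 0)"
proof -
  have "(gg has_real_derivative ph 0) (at 0 within {0..1})" by (rule gg_deriv_within) auto
  then have "((\<lambda>t. gg t / t) \<longlongrightarrow> 0) (at 0 within {0..1})"
    by (simp add: has_field_derivative_iff ph0 gg0)
  then show ?thesis by (rule comp_norm0)
qed

lemma DG0: "DG 0 = 0"
  unfolding DG_def by (rule blinfun_eqI) (simp add: blinfun.scaleR_left)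

lemma G_deriv: "(Gfun eps rho has_derivative blinfun_apply (DG x)) (at x)"
proof (cases "x = 0")
  case False
  define t where "t = norm x"
  have t: "t > 0" using False t_def by simp
  have n: "(norm has_derivative (\<lambda>h. h \<bullet> sgn x)) (at x)"
    using has_derivative_norm[OF False] by (simp add: gderiv_def)
  have g: "(gg has_derivative (\<lambda>y. ph t * y)) (at (norm x))"
    using gg_deriv[OF t] unfolding t_def has_field_derivative_def by simp
  have "((\<lambda>y. gg (norm y)) has_derivative (\<lambda>h. ph t * (h \<bullet> sgn x))) (at x)"
    using has_derivative_compose[OF n g] .
  moreover have "Gfun eps rho = (\<lambda>y. gg (norm y))" by (rule ext) (simp add: G_eq)
  ultimately have d: "(Gfun eps rho has_derivative (\<lambda>h. ph t * (h \<bullet> sgn x))) (at x)" by simp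
  show ?thesis
  proof (rule has_derivative_eq_rhs[OF d], intro ext)
    fix h
    show "ph t * (h \<bullet> sgn x) = blinfun_apply (DG x) h"
      unfolding DG_def using t by (simp add: t_def[symmetric] aa_def sgn_div_norm field_simps blinfun.scaleR_left)
  qed
next
  case True
  have e: "(1 / norm (y - 0)) *\<^sub>R (Gfun eps rho y - (Gfun eps rho 0 + blinfun_apply (DG 0) (y - 0))) = gg (norm y) / norm y" for y
    by (simp add: G_eq gg0 DG0)
  have "(Gfun eps rho has_derivative blinfun_apply (DG 0)) (at 0)"
    unfolding has_derivative_within e using gg_tendsto blinfun.bounded_linear_right by simp
  then show ?thesis using True by simp
qed

end


context P55 begin

lemma aa_deriv:
  assumes t: "0 < t"
  shows "(aa has_real_derivative (ff t * t - ph t) / (t * t)) (at t)"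
proof -
  have "((\<lambda>s. ph s / s) has_real_derivative (ff t * t - ph t * 1) / (t * t)) (at t)"
    by (rule DERIV_divide[OF ph_deriv[OF t] DERIV_ident]) (use t in simp)
  then have "((\<lambda>s. ph s / s) has_real_derivative (ff t * t - ph t) / (t * t)) (at t)" by simp
  then show ?thesis
    by (rule has_field_derivative_transform_within_open[where S="{0<..}"]) (use t in \<open>auto simp: aa_def\<close>)
qed

lemma inner_left0: "blinfun_inner_left (0::real^2) = 0"
  by (rule blinfun_eqI) simp

lemma hh: "(h::real^2) \<bullet> h = norm h * norm h"
  by (metis power2_eq_square power2_norm_eq_inner)

lemma DG_fun: "DG = (\<lambda>y. aa (norm y) *\<^sub>R blinfun_inner_left y)"
  by (rule ext) (simp add: DG_def)

lemma DG_deriv: "(DG has_derivative blinfun_apply (D2 x)) (at x)"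
proof (cases "x = 0")
  case False
  define t where "t = norm x"
  have t: "t > 0" using False t_def by simp
  have n: "(norm has_derivative (\<lambda>h. h \<bullet> sgn x)) (at x)"
    using has_derivative_norm[OF False] by (simp add: gderiv_def)
  have g0: "(aa has_derivative (\<lambda>y. ((ff t * t - ph t) / (t * t)) * y)) (at t)"
    using aa_deriv[OF t] unfolding has_field_derivative_def .
  have g: "(aa has_derivative (\<lambda>y. ((ff t * t - ph t) / (t * t)) * y)) (at (norm x))"
    using g0 unfolding t_def .
  have a: "((\<lambda>y. aa (norm y)) has_derivative (\<lambda>h. ((ff t * t - ph t) / (t * t)) * (h \<bullet> sgn x))) (at x)"
    using has_derivative_compose[OF n g] .
  have l: "(blinfun_inner_left has_derivative blinfun_inner_left) (at x)"
    by (rule bounded_linear.has_derivative[OF bounded_linear_blinfun_inner_left has_derivative_ident])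
  have d: "(DG has_derivative (\<lambda>h. aa (norm x) *\<^sub>R blinfun_inner_left h +
        (((ff t * t - ph t) / (t * t)) * (h \<bullet> sgn x)) *\<^sub>R blinfun_inner_left x)) (at x)"
    unfolding DG_fun by (rule has_derivative_scaleR[OF a l])
  show ?thesis
  proof (rule has_derivative_eq_rhs[OF d], intro ext)
    fix h
    have "((ff t * t - ph t) / (t * t)) * (h \<bullet> sgn x) = bb (norm x) * (h \<bullet> x)"
      using t by (simp add: t_def[symmetric] bb_def aa_def sgn_div_norm power2_eq_square field_simps)
    then show "aa (norm x) *\<^sub>R blinfun_inner_left h +
        (((ff t * t - ph t) / (t * t)) * (h \<bullet> sgn x)) *\<^sub>R blinfun_inner_left x = blinfun_apply (D2 x) h"
      by (simp add: D2_apply)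
  qed
next
  case True
  have e: "norm ((1 / norm (y - 0)) *\<^sub>R (DG y - (DG 0 + blinfun_apply (D2 0) (y - 0)))) \<le> \<bar>aa (norm y) - ff 0\<bar>" for y
  proof (cases "y = 0")
    case True then show ?thesis by simp
  next
    case False
    have "DG y - (DG 0 + blinfun_apply (D2 0) (y - 0)) = (aa (norm y) - ff 0) *\<^sub>R blinfun_inner_left y"
      by (simp add: DG0 D2_apply DG_def aa_def bb_def inner_left0 algebra_simps)
    then have "norm ((1 / norm (y - 0)) *\<^sub>R (DG y - (DG 0 + blinfun_apply (D2 0) (y - 0))))
        = \<bar>aa (norm y) - ff 0\<bar> * (norm (blinfun_inner_left y) / norm y)" by simp
    also have "\<dots> \<le> \<bar>aa (norm y) - ff 0\<bar> * 1"
      using norm_inner_left_le[of y] False by (intro mult_left_mono) auto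
    finally show ?thesis by simp
  qed
  have lim: "((\<lambda>y::real^2. \<bar>aa (norm y) - ff 0\<bar>) \<longlongrightarrow> 0) (at 0)"
    using tendsto_rabs_zero[OF LIM_zero[OF aa_tendsto]] .
  have "((\<lambda>y. (1 / norm (y - 0)) *\<^sub>R (DG y - (DG 0 + blinfun_apply (D2 0) (y - 0)))) \<longlongrightarrow> 0) (at 0)"
    by (rule Lim_null_comparison[OF always_eventually lim]) (use e in auto)
  then have "(DG has_derivative blinfun_apply (D2 0)) (at 0)"
    unfolding has_derivative_within using blinfun.bounded_linear_right by simp
  then show ?thesis using True by simp
qed

lemma quad_form:
  fixes x h :: "real^2"
  defines "t \<equiv> norm x"
  defines "c \<equiv> (if t = 0 then 0 else (h \<bullet> x)^2 / t^2)"
  shows "blinfun_apply (blinfun_apply (D2 x) h) h = aa t * ((norm h)^2 - c) + ff t * c"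
    and "0 \<le> c" "c \<le> (norm h)^2"
proof -
  show "0 \<le> c" unfolding c_def by simp
  show "c \<le> (norm h)^2"
  proof (cases "t = 0")
    case False
    have "(h \<bullet> x)^2 \<le> (norm h * norm x)^2"
      using power_mono[OF Cauchy_Schwarz_ineq2[of h x], of 2] by simp
    then show ?thesis using False unfolding c_def t_def by (simp add: field_simps power_mult_distrib)
  qed (simp add: c_def)
  show "blinfun_apply (blinfun_apply (D2 x) h) h = aa t * ((norm h)^2 - c) + ff t * c"
  proof (cases "t = 0")
    case True
    then have "x = 0" unfolding t_def by simp
    then show ?thesis using True by (simp add: D2_apply2 c_def bb_def power2_norm_eq_inner t_def)
  next
    case False
    then show ?thesis unfolding D2_apply2 c_def
      by (simp add: t_def[symmetric] bb_def hh power2_eq_square inner_commute field_simps)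
  qed
qed

lemma hess_bounds:
  fixes x h :: "real^2"
  shows "cq * (1 + norm x) powr (- mu) * (norm h)^2 \<le> blinfun_apply (blinfun_apply (D2 x) h) h"
    and "blinfun_apply (blinfun_apply (D2 x) h) h \<le> C6 * (1 + norm x) powr (p - 2) * (norm h)^2"
proof -
  define t where "t = norm x"
  define c where "c = (if t = 0 then 0 else (h \<bullet> x)^2 / t^2)"
  have q: "blinfun_apply (blinfun_apply (D2 x) h) h = aa t * ((norm h)^2 - c) + ff t * c"
    "0 \<le> c" "c \<le> (norm h)^2" using quad_form[of x h] unfolding t_def c_def by auto
  have t0: "0 \<le> t" unfolding t_def by simp
  define L where "L = cq * (1 + t) powr (- mu)"
  define U where "U = C6 * (1 + t) powr (p - 2)"
  have fL: "L \<le> ff t" and aL: "L \<le> aa t" using ff_bounds(2)[OF t0] aa_lower[OF t0] by (auto simp: L_def)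
  have fU: "ff t \<le> U"
  proof -
    have "ff t \<le> Cq * (1 + t) powr (p - 2)" using ff_bounds(1)[OF t0] .
    also have "\<dots> \<le> U" unfolding U_def C6_def using Cq_pos p1 by (intro mult_right_mono) auto
    finally show ?thesis .
  qed
  have aU: "aa t \<le> U" using aa_upper[OF t0] by (simp add: U_def)
  have "L * (norm h)^2 = L * ((norm h)^2 - c) + L * c" by (simp add: algebra_simps)
  also have "\<dots> \<le> aa t * ((norm h)^2 - c) + ff t * c"
    using q fL aL by (intro add_mono mult_right_mono) auto
  finally show "cq * (1 + norm x) powr (- mu) * (norm h)^2 \<le> blinfun_apply (blinfun_apply (D2 x) h) h"
    using q by (simp add: L_def t_def)
  have "aa t * ((norm h)^2 - c) + ff t * c \<le> U * ((norm h)^2 - c) + U * c"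
    using q fU aU by (intro add_mono mult_right_mono) auto
  also have "\<dots> = U * (norm h)^2" by (simp add: algebra_simps)
  finally show "blinfun_apply (blinfun_apply (D2 x) h) h \<le> C6 * (1 + norm x) powr (p - 2) * (norm h)^2"
    using q by (simp add: U_def t_def)
qed

lemma D2_norm: "norm (D2 x) \<le> ff (norm x) + 2 * aa (norm x)"
proof -
  define t where "t = norm x"
  have t0: "0 \<le> t" unfolding t_def by simp
  have fp: "0 < ff t" "0 < aa t" using ff_pos aa_pos t0 by auto
  have b: "\<bar>bb t * (h \<bullet> x) * (z \<bullet> x)\<bar> \<le> (ff t + aa t) * (norm h * norm z)" for h z
  proof (cases "t = 0")
    case True then show ?thesis using fp by (simp add: bb_def)
  next
    case False
    have "\<bar>(h \<bullet> x) * (z \<bullet> x)\<bar> \<le> (norm h * norm x) * (norm z * norm x)"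
      unfolding abs_mult by (intro mult_mono Cauchy_Schwarz_ineq2) auto
    also have "\<dots> = (norm h * norm z) * t^2" by (simp add: t_def power2_eq_square)
    finally have i: "\<bar>(h \<bullet> x) * (z \<bullet> x)\<bar> \<le> (norm h * norm z) * t^2" .
    have "\<bar>bb t * (h \<bullet> x) * (z \<bullet> x)\<bar> = \<bar>ff t - aa t\<bar> / t^2 * \<bar>(h \<bullet> x) * (z \<bullet> x)\<bar>"
      using False by (simp add: bb_def abs_mult)
    also have "\<dots> \<le> \<bar>ff t - aa t\<bar> / t^2 * ((norm h * norm z) * t^2)"
      by (intro mult_left_mono i) auto
    also have "\<dots> = \<bar>ff t - aa t\<bar> * (norm h * norm z)" using False by simp
    also have "\<dots> \<le> (ff t + aa t) * (norm h * norm z)" using fp by (intro mult_right_mono) auto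
    finally show ?thesis .
  qed
  have c: "\<bar>aa t * (z \<bullet> h)\<bar> \<le> aa t * (norm h * norm z)" for h z :: "real^2"
    using fp Cauchy_Schwarz_ineq2[of z h] by (simp add: abs_mult mult.commute mult_left_mono)
  have inner: "norm (blinfun_apply (D2 x) h) \<le> (ff t + 2 * aa t) * norm h" for h
  proof (rule norm_blinfun_bound)
    show "0 \<le> (ff t + 2 * aa t) * norm h" using fp by simp
    fix z
    have "norm (blinfun_apply (blinfun_apply (D2 x) h) z) = \<bar>aa t * (z \<bullet> h) + bb t * (h \<bullet> x) * (z \<bullet> x)\<bar>"
      by (simp add: D2_apply2 t_def)
    also have "\<dots> \<le> aa t * (norm h * norm z) + (ff t + aa t) * (norm h * norm z)"
      using b[of h z] c[of z h] by (smt (verit) mult.commute)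
    also have "\<dots> = (ff t + 2 * aa t) * norm h * norm z" by (simp add: algebra_simps)
    finally show "norm (blinfun_apply (blinfun_apply (D2 x) h) z) \<le> (ff t + 2 * aa t) * norm h * norm z" .
  qed
  show ?thesis unfolding t_def[symmetric]
    by (rule norm_blinfun_bound) (use fp inner in auto)
qed

end

theorem proposition5p5:
  fixes p \<mu> \<epsilon> :: real and \<rho> :: "real \<Rightarrow> real"
  assumes "p > 1" and "\<mu> > 1" and "\<epsilon> > 0"
    and "continuous_on {0..} \<rho>"
    and "\<And>r s. 0 \<le> r \<Longrightarrow> r \<le> s \<Longrightarrow> \<rho> s \<le> \<rho> r"
    and "\<And>r. 0 \<le> r \<Longrightarrow> \<rho> r \<in> {2 - \<mu>..p}"
    and "\<rho> 0 = p"
    and "(\<rho> \<longlongrightarrow> 2 - \<mu>) at_top"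
  shows "\<exists>DG :: real^2 \<Rightarrow> ((real^2) \<Rightarrow>\<^sub>L real).
         \<exists>D2G :: real^2 \<Rightarrow> ((real^2) \<Rightarrow>\<^sub>L ((real^2) \<Rightarrow>\<^sub>L real)).
           (\<forall>\<xi>. (Gfun \<epsilon> \<rho> has_derivative blinfun_apply (DG \<xi>)) (at \<xi>)) \<and>
           (\<forall>\<xi>. (DG has_derivative blinfun_apply (D2G \<xi>)) (at \<xi>)) \<and>
           (\<exists>c5 c6. c5 > 0 \<and> c6 > 0 \<and>
              (\<forall>\<xi> \<eta>. c5 * (1 + norm \<xi>) powr (- \<mu>) * (norm \<eta>)\<^sup>2
                         \<le> blinfun_apply (blinfun_apply (D2G \<xi>) \<eta>) \<eta> \<and>
                       blinfun_apply (blinfun_apply (D2G \<xi>) \<eta>) \<eta>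
                         \<le> c6 * (1 + norm \<xi>) powr (p - 2) * (norm \<eta>)\<^sup>2)) \<and>
           (\<exists>c49. \<forall>\<xi>. norm (D2G \<xi>) * (norm \<xi>)\<^sup>2 \<le> c49 * (Gfun \<epsilon> \<rho> \<xi> + 1))"
proof -
  interpret P55 p \<mu> \<epsilon> \<rho> by unfold_locales (use assms in auto)
  have 1: "\<forall>\<xi>. (Gfun \<epsilon> \<rho> has_derivative blinfun_apply (DG \<xi>)) (at \<xi>)" using G_deriv by blast
  have 2: "\<forall>\<xi>. (DG has_derivative blinfun_apply (D2 \<xi>)) (at \<xi>)" using DG_deriv by blast
  have 3: "\<exists>c5 c6. c5 > 0 \<and> c6 > 0 \<and>
              (\<forall>\<xi> \<eta>. c5 * (1 + norm \<xi>) powr (- \<mu>) * (norm \<eta>)\<^sup>2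
                         \<le> blinfun_apply (blinfun_apply (D2 \<xi>) \<eta>) \<eta> \<and>
                       blinfun_apply (blinfun_apply (D2 \<xi>) \<eta>) \<eta>
                         \<le> c6 * (1 + norm \<xi>) powr (p - 2) * (norm \<eta>)\<^sup>2)"
    using hess_bounds cq_pos C6_pos by blast
  have 4: "\<forall>\<xi>. norm (D2 \<xi>) * (norm \<xi>)\<^sup>2 \<le> c49 * (Gfun \<epsilon> \<rho> \<xi> + 1)"
  proof
    fix \<xi> :: "real^2"
    have "norm (D2 \<xi>) * (norm \<xi>)\<^sup>2 \<le> (ff (norm \<xi>) + 2 * aa (norm \<xi>)) * (norm \<xi>)\<^sup>2"
      using D2_norm[of \<xi>] by (intro mult_right_mono) auto
    also have "\<dots> \<le> c49 * (gg (norm \<xi>) + 1)" by (rule norm_bound_1d) simp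
    finally show "norm (D2 \<xi>) * (norm \<xi>)\<^sup>2 \<le> c49 * (Gfun \<epsilon> \<rho> \<xi> + 1)" by (simp add: G_eq)
  qed
  show ?thesis using 1 2 3 4 by blast
qed

end
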